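(* Let $A\in\mathbb{R}^{n\times n}$ be symmetric positive semidefinite, let $1\le k\le n$, and let $\mathrm{OPT}=\max_{\|y\|_2=1,\|y\|_0\le k} y^{\intercal}Ay$. For each $i\in[n]$ let $\hat x_i\in\mathbb{R}^n$ be defined by $[\hat x_i]_j=A_{i,j}$ if $|A_{i,j}|$ is one of the $k$ largest (in absolute value) entries of the $i$-th column $A_{\cdot,i}$, and $[\hat x_i]_j=0$ otherwise, and let $x_i=\hat x_i/\|\hat x_i\|_2$. Let $e_i$ denote the $i$-th standard basis vector. Then the best (i.e. maximizing $v^{\intercal}Av$) vector $v$ among all the $x_i$'s and $e_i$'s satisfies $v^{\intercal}Av\ge \mathrm{OPT}/\sqrt{k}$.
   Context: $\|y\|_0$ denotes the number of nonzero entries of $y$. Each $x_i$ and $e_i$ is a unit-norm $k$-sparse vector. *)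

theory Defs
  imports "HOL-Analysis.Analysis"
begin

definition l0norm :: "real ^ 'n \<Rightarrow> nat" where
  "l0norm y = card {j. y $ j \<noteq> 0}"

definition sym_psd :: "real ^ 'n ^ 'n \<Rightarrow> bool" where
  "sym_psd A \<longleftrightarrow> transpose A = A \<and> (\<forall>x. 0 \<le> x \<bullet> (A *v x))"

definition sparse_opt :: "real ^ 'n ^ 'n \<Rightarrow> nat \<Rightarrow> real" where
  "sparse_opt A k = Sup {y \<bullet> (A *v y) | y. norm y = 1 \<and> l0norm y \<le> k}"

definition topk_set :: "real ^ 'n ^ 'n \<Rightarrow> nat \<Rightarrow> 'n \<Rightarrow> 'n set \<Rightarrow> bool" where
  "topk_set A k i S \<longleftrightarrow> card S = k \<and>
     (\<forall>j\<in>S. \<forall>j'. j' \<notin> S \<longrightarrow> \<bar>A $ j' $ i\<bar> \<le> \<bar>A $ j $ i\<bar>)"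

definition trunc_col :: "real ^ 'n ^ 'n \<Rightarrow> 'n \<Rightarrow> 'n set \<Rightarrow> real ^ 'n" where
  "trunc_col A i S = (\<chi> j. if j \<in> S then A $ j $ i else 0)"

end

theory Submission
  imports Defs
begin

lemma psd_symm:
  fixes A :: "real ^ 'n ^ 'n"
  assumes "transpose A = A"
  shows "v \<bullet> (A *v u) = u \<bullet> (A *v v)"
proof -
  have "v \<bullet> (A *v u) = (v v* A) \<bullet> u" by (simp add: dot_lmul_matrix)
  also have "\<dots> = (transpose A *v v) \<bullet> u" by (simp add: transpose_matrix_vector)
  also have "\<dots> = u \<bullet> (A *v v)" using assms by (simp add: inner_commute)
  finally show ?thesis .
qed

lemma psd_cs:
  fixes A :: "real ^ 'n ^ 'n"
  assumes "sym_psd A"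
  shows "(u \<bullet> (A *v v))^2 \<le> (u \<bullet> (A *v u)) * (v \<bullet> (A *v v))"
proof -
  define a where "a = u \<bullet> (A *v u)"
  define b where "b = u \<bullet> (A *v v)"
  define c where "c = v \<bullet> (A *v v)"
  have sy: "v \<bullet> (A *v u) = b" using assms psd_symm unfolding sym_psd_def b_def by blast
  have ex: "\<And>p r. (p *\<^sub>R u + r *\<^sub>R v) \<bullet> (A *v (p *\<^sub>R u + r *\<^sub>R v)) = p^2*a + 2*p*r*b + r^2*c"
    by (simp add: matrix_vector_right_distrib matrix_vector_mult_scaleR inner_add_left
        inner_add_right sy a_def b_def[symmetric] c_def algebra_simps power2_eq_square)
  have pos: "\<And>p r. 0 \<le> p^2*a + 2*p*r*b + r^2*c"
    using assms ex unfolding sym_psd_def by metis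
  have h1: "0 \<le> c*(a*c - b^2)" using pos[of c "-b"] by (simp add: algebra_simps power2_eq_square)
  have h2: "0 \<le> a*(a*c - b^2)" using pos[of "-b" a] by (simp add: algebra_simps power2_eq_square)
  have h3: "0 \<le> a - 2*b^2 + b^2*c" using pos[of 1 "-b"] by (simp add: algebra_simps power2_eq_square)
  have a0: "0 \<le> a" and c0: "0 \<le> c" using assms unfolding sym_psd_def a_def c_def by auto
  have "b^2 \<le> a*c"
  proof (cases "c > 0")
    case True then show ?thesis using h1 by (simp add: zero_le_mult_iff)
  next
    case False
    hence c: "c = 0" using c0 by simp
    show ?thesis
    proof (cases "a > 0")
      case True then show ?thesis using h2 by (simp add: zero_le_mult_iff)
    next
      case False
      hence "a = 0" using a0 by simp
      thus ?thesis using h3 c by simp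
    qed
  qed
  thus ?thesis unfolding a_def b_def c_def .
qed

lemma topk_sum:
  fixes A :: "real ^ 'n ^ 'n"
  assumes "topk_set A k i S" "card T \<le> k"
  shows "(\<Sum>j\<in>T. (A$j$i)^2) \<le> (\<Sum>j\<in>S. (A$j$i)^2)"
proof -
  define g where "g j = (A$j$i)^2" for j
  have fin: "finite T" "finite S" by auto
  have cS: "card S = k" using assms(1) unfolding topk_set_def by simp
  have "card T = card (T \<inter> S) + card (T - S)"
    using fin by (metis card_Int_Diff)
  moreover have "card S = card (S \<inter> T) + card (S - T)"
    using fin by (metis card_Int_Diff)
  ultimately have "card (T - S) \<le> card (S - T)" using assms(2) cS by (simp add: Int_commute)
  then obtain f where f: "f ` (T - S) \<subseteq> S - T" "inj_on f (T - S)"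
    using card_le_inj[of "T - S" "S - T"] by auto
  have le: "g j \<le> g (f j)" if "j \<in> T - S" for j
  proof -
    have "f j \<in> S" "j \<notin> S" using f that by auto
    hence "\<bar>A$j$i\<bar> \<le> \<bar>A$(f j)$i\<bar>" using assms(1) unfolding topk_set_def by blast
    thus ?thesis unfolding g_def by (simp add: abs_le_square_iff)
  qed
  have "(\<Sum>j\<in>T - S. g j) \<le> (\<Sum>j\<in>T - S. g (f j))" using le by (intro sum_mono) auto
  also have "\<dots> = (\<Sum>j\<in>f ` (T - S). g j)" using f(2) by (simp add: sum.reindex)
  also have "\<dots> \<le> (\<Sum>j\<in>S - T. g j)" using f(1) by (intro sum_mono2) (auto simp: g_def)
  finally have d: "(\<Sum>j\<in>T - S. g j) \<le> (\<Sum>j\<in>S - T. g j)" .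
  have "(\<Sum>j\<in>T. g j) = (\<Sum>j\<in>T \<inter> S. g j) + (\<Sum>j\<in>T - S. g j)" by (rule sum.Int_Diff) simp
  moreover have "(\<Sum>j\<in>S. g j) = (\<Sum>j\<in>S \<inter> T. g j) + (\<Sum>j\<in>S - T. g j)" by (rule sum.Int_Diff) simp
  ultimately show ?thesis using d unfolding g_def by (simp add: Int_commute)
qed

theorem lemma1:
  fixes A :: "real ^ 'n ^ 'n" and k :: nat and S :: "'n \<Rightarrow> 'n set"
  assumes "sym_psd A"
    and "1 \<le> k" and "k \<le> CARD('n)"
    and "\<forall>i. topk_set A k i (S i)"
  shows "Max ((\<lambda>v. v \<bullet> (A *v v)) `
           ((\<lambda>i. inverse (norm (trunc_col A i (S i))) *\<^sub>R trunc_col A i (S i)) ` UNIV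
            \<union> (\<lambda>i. axis i 1) ` UNIV))
         \<ge> sparse_opt A k / sqrt (real k)"
proof -
  define q where "q v = v \<bullet> (A *v v)" for v
  define xh where "xh i = trunc_col A i (S i)" for i
  define nx where "nx i = norm (xh i)" for i
  define V where "V = (\<lambda>i. inverse (norm (trunc_col A i (S i))) *\<^sub>R trunc_col A i (S i)) ` UNIV
            \<union> (\<lambda>i. axis i 1) ` (UNIV :: 'n set)"
  define M where "M = Max (q ` V)"
  have finV: "finite (q ` V)" unfolding V_def by simp
  have MV: "q v \<le> M" if "v \<in> V" for v unfolding M_def using finV that by simp
  have symA: "A$i$j = A$j$i" for i j
    using assms(1) unfolding sym_psd_def by (metis transpose_def vec_lambda_beta)
  have qax: "q (axis i 1) = A$i$i" for i
    unfolding q_def by (simp add: inner_axis' matrix_vector_mult_basis column_def)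
  have diag: "A$i$i \<le> M" for i using MV[of "axis i 1"] qax unfolding V_def by auto
  have diag0: "0 \<le> A$i$i" for i using assms(1) qax unfolding sym_psd_def q_def by metis
  have M0: "0 \<le> M" using diag diag0 order_trans by blast
  have xx: "xh i \<bullet> xh i = (\<Sum>j\<in>S i. (A$j$i)^2)" for i
  proof -
    have "xh i \<bullet> xh i = (\<Sum>j\<in>UNIV. if j \<in> S i then (A$j$i)^2 else 0)"
      unfolding inner_vec_def xh_def trunc_col_def by (intro sum.cong) (auto simp: power2_eq_square)
    also have "\<dots> = (\<Sum>j\<in>S i. (A$j$i)^2)" by (simp add: sum.If_cases)
    finally show ?thesis .
  qed
  have nx2: "(nx i)^2 = (\<Sum>j\<in>S i. (A$j$i)^2)" for i
    unfolding nx_def using xx by (simp add: power2_norm_eq_inner)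
  have xcol: "xh i \<bullet> (A *v axis i 1) = xh i \<bullet> xh i" for i
    unfolding inner_vec_def xh_def trunc_col_def
    by (intro sum.cong) (auto simp: matrix_vector_mult_basis column_def)
  have nxM: "nx i \<le> M" for i
  proof (cases "xh i = 0")
    case True then show ?thesis using M0 unfolding nx_def by simp
  next
    case False
    hence np: "nx i > 0" unfolding nx_def by simp
    define x where "x = inverse (nx i) *\<^sub>R xh i"
    have xV: "x \<in> V" unfolding V_def x_def nx_def xh_def by auto
    have "x \<bullet> (A *v axis i 1) = inverse (nx i) * (nx i)^2"
      unfolding x_def using xcol[of i] by (simp add: nx_def power2_norm_eq_inner)
    also have "\<dots> = nx i" using np by (simp add: power2_eq_square)
    finally have e: "x \<bullet> (A *v axis i 1) = nx i" .
    have "(nx i)^2 \<le> q x * q (axis i 1)"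
      using psd_cs[OF assms(1), of x "axis i 1"] e unfolding q_def by simp
    also have "\<dots> \<le> M * M"
      using MV[OF xV] diag[of i] qax[of i] diag0[of i] assms(1)
      unfolding q_def sym_psd_def by (intro mult_mono) auto
    finally have "(nx i)^2 \<le> M^2" by (simp add: power2_eq_square)
    thus ?thesis using M0 by (rule power2_le_imp_le)
  qed
  have bound: "q y \<le> M * sqrt (real k)" if y: "norm y = 1" "l0norm y \<le> k" for y
  proof -
    define T where "T = {j. y$j \<noteq> 0}"
    have cT: "card T \<le> k" using y(2) unfolding l0norm_def T_def .
    have L2y: "L2_set (\<lambda>j. y$j) T = 1"
    proof -
      have "L2_set (\<lambda>j. y$j) T = sqrt (\<Sum>j\<in>T. (y$j)^2)" unfolding L2_set_def ..
      also have "(\<Sum>j\<in>T. (y$j)^2) = (\<Sum>j\<in>UNIV. (y$j)^2)"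
        by (intro sum.mono_neutral_left) (auto simp: T_def)
      also have "sqrt \<dots> = norm y" unfolding norm_vec_def L2_set_def by simp
      finally show ?thesis using y(1) by simp
    qed
    have Ay: "\<bar>(A *v y)$i\<bar> \<le> nx i" for i
    proof -
      have "(A *v y)$i = (\<Sum>j\<in>UNIV. A$j$i * y$j)"
        by (simp add: matrix_vector_mult_def symA)
      also have "\<dots> = (\<Sum>j\<in>T. A$j$i * y$j)"
        by (rule sym, rule sum.mono_neutral_left) (auto simp: T_def)
      finally have "\<bar>(A *v y)$i\<bar> \<le> (\<Sum>j\<in>T. \<bar>A$j$i\<bar> * \<bar>y$j\<bar>)"
        by (metis (no_types, lifting) abs_mult sum.cong sum_abs)
      also have "\<dots> \<le> L2_set (\<lambda>j. A$j$i) T * L2_set (\<lambda>j. y$j) T" by (rule L2_set_mult_ineq)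
      also have "\<dots> = sqrt (\<Sum>j\<in>T. (A$j$i)^2)" using L2y unfolding L2_set_def by simp
      also have "\<dots> \<le> sqrt ((nx i)^2)"
        unfolding nx2 using topk_sum[OF _ cT] assms(4) by simp
      also have "\<dots> = nx i" unfolding nx_def by simp
      finally show ?thesis .
    qed
    have "q y = (\<Sum>i\<in>UNIV. y$i * (A *v y)$i)" unfolding q_def inner_vec_def by simp
    also have "\<dots> \<le> (\<Sum>i\<in>UNIV. \<bar>y$i\<bar> * M)"
    proof (intro sum_mono)
      fix i
      have "y$i * (A *v y)$i \<le> \<bar>y$i\<bar> * \<bar>(A *v y)$i\<bar>" by (simp add: abs_mult[symmetric])
      also have "\<dots> \<le> \<bar>y$i\<bar> * M" using Ay[of i] nxM[of i] by (intro mult_left_mono) auto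
      finally show "y$i * (A *v y)$i \<le> \<bar>y$i\<bar> * M" .
    qed
    also have "\<dots> = (\<Sum>i\<in>T. \<bar>1\<bar> * \<bar>y$i\<bar>) * M"
    proof -
      have "(\<Sum>i\<in>UNIV. \<bar>y$i\<bar>) = (\<Sum>i\<in>T. \<bar>y$i\<bar>)"
        by (rule sym, rule sum.mono_neutral_left) (auto simp: T_def)
      thus ?thesis by (simp add: sum_distrib_right[symmetric])
    qed
    also have "\<dots> \<le> (L2_set (\<lambda>_. 1) T * L2_set (\<lambda>j. y$j) T) * M"
      by (intro mult_right_mono L2_set_mult_ineq M0)
    also have "\<dots> = sqrt (real (card T)) * M" using L2y by (simp add: L2_set_constant)
    also have "\<dots> \<le> sqrt (real k) * M" using cT M0 by (intro mult_right_mono) auto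
    finally show ?thesis by (simp add: mult.commute)
  qed
  obtain i0 :: 'n where True by simp
  have ne: "{y \<bullet> (A *v y) | y. norm y = 1 \<and> l0norm y \<le> k} \<noteq> {}"
  proof -
    have "l0norm (axis i0 (1::real)) = 1"
      unfolding l0norm_def by (simp add: axis_def)
    hence "axis i0 1 \<bullet> (A *v axis i0 1) \<in> {y \<bullet> (A *v y) | y. norm y = 1 \<and> l0norm y \<le> k}"
      using assms(2) by (intro CollectI exI[of _ "axis i0 1"]) simp
    thus ?thesis by (metis empty_iff)
  qed
  have "sparse_opt A k \<le> M * sqrt (real k)"
    unfolding sparse_opt_def using bound unfolding q_def
    by (intro cSup_least[OF ne]) auto
  moreover have "sqrt (real k) > 0" using assms(2) by simp
  ultimately have "sparse_opt A k / sqrt (real k) \<le> M" by (simp add: divide_le_eq)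
  thus ?thesis unfolding M_def V_def q_def .
qed

end
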